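(* Let $g$ be an $n$-variable Boolean function, $b\in\mathbb{F}_2$, and $g_b$ the $(n+1)$-variable function $g_b(X_{n+1},X_n,\ldots,X_1)=(1\oplus X_{n+1})g(X_n,\ldots,X_1)\oplus X_{n+1}(b\oplus g(1\oplus X_n,\ldots,1\oplus X_1))$. If $g$ is $t$-resilient but not $(t+1)$-resilient for some integer $0\le t<n$ with $t\equiv b\pmod 2$, then $g_b$ is $(t+1)$-resilient but not $(t+2)$-resilient. If moreover $g$ is plateaued, then $g_b$ is plateaued and every nonzero value $W_{g_b}^2(\bm{\beta})$ equals $\max_{\bm{\alpha}}W_g^2(\bm{\alpha})=2^{-H_\infty(g)}$.
   Context: Walsh transform: $W_f(\bm{\alpha})=2^{-n}\sum_{\mathbf{x}}(-1)^{f(\mathbf{x})\oplus\langle\mathbf{x},\bm{\alpha}\rangle}$. $f$ is $t$-resilient if $W_f(\bm{\alpha})=0$ whenever the Hamming weight $\mathrm{wt}(\bm{\alpha})\le t$; $f$ is plateaued if $W_f$ takes only values in $\{0,c,-c\}$ for some $c$. $H_\infty(f)=\min_{\bm{\alpha}:W_f^2(\bm{\alpha})\ne0}\log_2(1/W_f^2(\bm{\alpha}))$. *)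

theory Defs
  imports Complex_Main
begin

text \<open>Vectors of F_2^n are bool lists of length n (True = 1); a Boolean function
  on n variables is a map bool list => bool, considered on lists of length n.\<close>

definition vecs :: "nat \<Rightarrow> bool list set" where
  "vecs n = {x. length x = n}"

definition wt :: "bool list \<Rightarrow> nat" where
  "wt a = length (filter id a)"

definition ip :: "bool list \<Rightarrow> bool list \<Rightarrow> bool" where
  "ip x a = odd (length (filter id (map2 (\<and>) x a)))"

definition walsh :: "nat \<Rightarrow> (bool list \<Rightarrow> bool) \<Rightarrow> bool list \<Rightarrow> real" where
  "walsh n f a = (1 / 2 ^ n) * (\<Sum>x\<in>vecs n. (-1::real) ^ of_bool (f x \<noteq> ip x a))"

definition resilient :: "nat \<Rightarrow> nat \<Rightarrow> (bool list \<Rightarrow> bool) \<Rightarrow> bool" where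
  "resilient n t f \<longleftrightarrow> (\<forall>a\<in>vecs n. wt a \<le> t \<longrightarrow> walsh n f a = 0)"

definition plateaued :: "nat \<Rightarrow> (bool list \<Rightarrow> bool) \<Rightarrow> bool" where
  "plateaued n f \<longleftrightarrow> (\<exists>c. \<forall>a\<in>vecs n. walsh n f a \<in> {0, c, -c})"

definition H_inf :: "nat \<Rightarrow> (bool list \<Rightarrow> bool) \<Rightarrow> real" where
  "H_inf n f = Min {log 2 (1 / (walsh n f a)\<^sup>2) | a. a \<in> vecs n \<and> (walsh n f a)\<^sup>2 \<noteq> 0}"

text \<open>g_b(X_{n+1}, X_n..X_1) = (1+X_{n+1}) g(X_n..X_1) + X_{n+1}(b + g(1+X_n,..,1+X_1));
  the first list entry is X_{n+1}.\<close>
definition gext :: "(bool list \<Rightarrow> bool) \<Rightarrow> bool \<Rightarrow> bool list \<Rightarrow> bool" where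
  "gext g b x = (if hd x then (b \<noteq> g (map Not (tl x))) else g (tl x))"

end

theory Submission
  imports Defs
begin

lemma ip_Cons: "ip (x#xs) (a#as) = ((x \<and> a) \<noteq> ip xs as)"
  by (cases x; cases a) (simp_all add: ip_def)

lemma wt_Cons: "wt (a#as) = of_bool a + wt as"
  by (simp add: wt_def)

lemma ip_map_Not: "length y = length a \<Longrightarrow> ip (map Not y) a = (ip y a \<noteq> odd (wt a))"
proof (induction y arbitrary: a)
  case Nil thus ?case by (simp add: ip_def wt_def)
next
  case (Cons y ys)
  then obtain c cs where a: "a = c # cs" "length ys = length cs" by (cases a) auto
  show ?case using Cons.IH[OF a(2)] by (auto simp: a ip_Cons wt_Cons)
qed

lemma finite_vecs: "finite (vecs n)"
proof -
  have "vecs n = {xs. set xs \<subseteq> (UNIV::bool set) \<and> length xs = n}" by (auto simp: vecs_def)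
  thus ?thesis using finite_lists_length_eq[of "UNIV::bool set" n] by simp
qed

lemma vecs_Suc: "vecs (Suc n) = Cons False ` vecs n \<union> Cons True ` vecs n"
proof
  show "vecs (Suc n) \<subseteq> Cons False ` vecs n \<union> Cons True ` vecs n"
  proof
    fix x assume "x \<in> vecs (Suc n)"
    then obtain h t where "x = h # t" "t \<in> vecs n" by (cases x) (auto simp: vecs_def)
    thus "x \<in> Cons False ` vecs n \<union> Cons True ` vecs n" by (cases h) auto
  qed
qed (auto simp: vecs_def)

lemma sum_vecs_Suc: "(\<Sum>x\<in>vecs (Suc n). f x) = (\<Sum>y\<in>vecs n. f (False # y)) + (\<Sum>y\<in>vecs n. f (True # y))"
  unfolding vecs_Suc
  by (subst sum.union_disjoint) (auto simp: finite_vecs sum.reindex)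

lemma sign_xor: "(-1::real) ^ of_bool (p \<noteq> q) = (-1) ^ of_bool p * (-1) ^ of_bool q"
  by (cases p; cases q) auto

lemma sum_vecs_Not: "(\<Sum>y\<in>vecs n. f (map Not y)) = (\<Sum>y\<in>vecs n. f y)"
proof -
  have "bij_betw (map Not) (vecs n) (vecs n)"
    by (rule bij_betw_byWitness[where f'="map Not"]) (auto simp: vecs_def comp_def)
  thus ?thesis by (rule sum.reindex_bij_betw)
qed

lemma walsh_gext:
  assumes "a \<in> vecs n"
  shows "walsh (Suc n) (gext g b) (c # a) =
    (if even (of_bool b + of_bool c + wt a) then walsh n g a else 0)"
proof -
  let ?S = "\<Sum>y\<in>vecs n. (-1::real) ^ of_bool (g y \<noteq> ip y a)"
  let ?s = "(-1::real) ^ of_bool (b \<noteq> (c \<noteq> odd (wt a)))"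
  have A: "(\<Sum>y\<in>vecs n. (-1::real) ^ of_bool (gext g b (False#y) \<noteq> ip (False#y) (c#a))) = ?S"
    by (simp add: gext_def ip_Cons)
  have "(\<Sum>y\<in>vecs n. (-1::real) ^ of_bool (gext g b (True#y) \<noteq> ip (True#y) (c#a)))
      = (\<Sum>y\<in>vecs n. (-1::real) ^ of_bool ((b \<noteq> g (map Not y)) \<noteq> (c \<noteq> ip y a)))"
    by (simp add: gext_def ip_Cons)
  also have "\<dots> = (\<Sum>y\<in>vecs n. (-1::real) ^ of_bool ((b \<noteq> g (map Not (map Not y))) \<noteq> (c \<noteq> ip (map Not y) a)))"
    by (rule sum_vecs_Not[symmetric])
  also have "\<dots> = (\<Sum>y\<in>vecs n. ?s * (-1::real) ^ of_bool (g y \<noteq> ip y a))"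
  proof (rule sum.cong)
    fix y assume "y \<in> vecs n"
    hence "length y = length a" using assms by (simp add: vecs_def)
    hence "ip (map Not y) a = (ip y a \<noteq> odd (wt a))" by (rule ip_map_Not)
    thus "(-1::real) ^ of_bool ((b \<noteq> g (map Not (map Not y))) \<noteq> (c \<noteq> ip (map Not y) a)) =
        ?s * (-1::real) ^ of_bool (g y \<noteq> ip y a)"
      by (simp add: comp_def) (cases b; cases c; cases "g y"; cases "ip y a"; cases "odd (wt a)"; simp)
  qed simp
  also have "\<dots> = ?s * ?S" by (simp add: sum_distrib_left)
  finally have B: "(\<Sum>y\<in>vecs n. (-1::real) ^ of_bool (gext g b (True#y) \<noteq> ip (True#y) (c#a))) = ?s * ?S" .
  have "walsh (Suc n) (gext g b) (c # a) = (1 / 2 ^ Suc n) * (?S + ?s * ?S)"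
    unfolding walsh_def sum_vecs_Suc A B ..
  moreover have "?s = (if even (of_bool b + of_bool c + wt a) then 1 else -1)"
    by (cases b; cases c) auto
  ultimately show ?thesis by (auto simp: walsh_def)
qed

theorem mainTheorem7:
  fixes g :: "bool list \<Rightarrow> bool" and b :: bool and n t :: nat
  assumes "t < n"
    and "t mod 2 = of_bool b"
    and "resilient n t g" and "\<not> resilient n (t + 1) g"
  shows "resilient (n + 1) (t + 1) (gext g b) \<and> \<not> resilient (n + 1) (t + 2) (gext g b)
    \<and> (plateaued n g \<longrightarrow>
          plateaued (n + 1) (gext g b)
        \<and> (\<forall>\<beta>\<in>vecs (n + 1). (walsh (n + 1) (gext g b) \<beta>)\<^sup>2 \<noteq> 0 \<longrightarrow>
              (walsh (n + 1) (gext g b) \<beta>)\<^sup>2 = Max {(walsh n g a)\<^sup>2 | a. a \<in> vecs n})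
        \<and> Max {(walsh n g a)\<^sup>2 | a. a \<in> vecs n} = 2 powr (- H_inf n g))"
proof -
  have split: "\<exists>c a. \<beta> = c # a \<and> a \<in> vecs n" if hb: "\<beta> \<in> vecs (n+1)" for \<beta>
    using that by (cases \<beta>) (auto simp: vecs_def)
  have R1: "resilient (n + 1) (t + 1) (gext g b)"
    unfolding resilient_def
  proof (intro ballI impI)
    fix \<beta> assume "\<beta> \<in> vecs (n+1)" "wt \<beta> \<le> t + 1"
    then obtain c a where ca: "\<beta> = c # a" "a \<in> vecs n" using split by blast
    show "walsh (n + 1) (gext g b) \<beta> = 0"
    proof (cases "wt a \<le> t")
      case True
      hence "walsh n g a = 0" using assms(3) ca(2) by (auto simp: resilient_def)
      thus ?thesis using ca walsh_gext by simp
    next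
      case False
      hence "\<not> c" "wt a = t + 1" using \<open>wt \<beta> \<le> t + 1\<close> ca by (auto simp: wt_Cons)
      hence "\<not> even (of_bool b + of_bool c + wt a)" using assms(2) by (cases b) (simp_all, presburger+)
      thus ?thesis using ca walsh_gext by simp
    qed
  qed
  obtain a0 where a0: "a0 \<in> vecs n" "wt a0 \<le> t + 1" "walsh n g a0 \<noteq> 0"
    using assms(4) by (auto simp: resilient_def)
  have "wt a0 = t + 1" using a0 assms(3) by (force simp: resilient_def)
  hence ev: "even (of_bool b + of_bool True + wt a0)" using assms(2) by (cases b) (simp_all, presburger+)
  have V0: "walsh (n+1) (gext g b) (True # a0) = walsh n g a0"
    using walsh_gext[OF a0(1)] ev by simp
  have R2: "\<not> resilient (n + 1) (t + 2) (gext g b)"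
  proof
    assume "resilient (n + 1) (t + 2) (gext g b)"
    moreover have "True # a0 \<in> vecs (n+1)" "wt (True # a0) \<le> t + 2"
      using a0(1) \<open>wt a0 = t + 1\<close> by (auto simp: vecs_def wt_Cons)
    ultimately have "walsh (n+1) (gext g b) (True # a0) = 0" by (auto simp: resilient_def)
    thus False using V0 a0(3) by simp
  qed
  have P: "plateaued (n + 1) (gext g b)
        \<and> (\<forall>\<beta>\<in>vecs (n + 1). (walsh (n + 1) (gext g b) \<beta>)\<^sup>2 \<noteq> 0 \<longrightarrow>
              (walsh (n + 1) (gext g b) \<beta>)\<^sup>2 = Max {(walsh n g a)\<^sup>2 | a. a \<in> vecs n})
        \<and> Max {(walsh n g a)\<^sup>2 | a. a \<in> vecs n} = 2 powr (- H_inf n g)"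
    if pl: "plateaued n g"
  proof -
    obtain c where c: "\<And>a. a \<in> vecs n \<Longrightarrow> walsh n g a \<in> {0, c, -c}"
      using pl unfolding plateaued_def by blast
    have sq: "(walsh n g a)\<^sup>2 \<in> {0, c\<^sup>2}" if "a \<in> vecs n" for a
      using c[OF that] by auto
    have c0: "(walsh n g a0)\<^sup>2 = c\<^sup>2" using sq[OF a0(1)] a0(3) by auto
    hence cpos: "c\<^sup>2 > 0" using a0(3) by (metis zero_less_power2)
    have M: "Max {(walsh n g a)\<^sup>2 | a. a \<in> vecs n} = c\<^sup>2"
    proof (rule Max_eqI)
      have "{(walsh n g a)\<^sup>2 | a. a \<in> vecs n} = (\<lambda>a. (walsh n g a)\<^sup>2) ` vecs n" by auto
      thus "finite {(walsh n g a)\<^sup>2 | a. a \<in> vecs n}" using finite_vecs by simp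
      show "y \<le> c\<^sup>2" if "y \<in> {(walsh n g a)\<^sup>2 | a. a \<in> vecs n}" for y
        using that sq by fastforce
      show "c\<^sup>2 \<in> {(walsh n g a)\<^sup>2 | a. a \<in> vecs n}" using c0 a0(1) by (metis (mono_tags, lifting) mem_Collect_eq)
    qed
    have Vv: "walsh (n+1) (gext g b) \<beta> \<in> {0, c, -c}" if hb: "\<beta> \<in> vecs (n+1)" for \<beta>
    proof -
      obtain d a where "\<beta> = d # a" "a \<in> vecs n" using split[OF hb] by blast
      thus ?thesis using walsh_gext[of a n g b d] c by auto
    qed
    have H: "{log 2 (1 / (walsh n g a)\<^sup>2) | a. a \<in> vecs n \<and> (walsh n g a)\<^sup>2 \<noteq> 0} = {log 2 (1 / c\<^sup>2)}"
    proof
      show "{log 2 (1 / c\<^sup>2)} \<subseteq> {log 2 (1 / (walsh n g a)\<^sup>2) | a. a \<in> vecs n \<and> (walsh n g a)\<^sup>2 \<noteq> 0}"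
        using a0 c0 cpos by (smt (verit, best) mem_Collect_eq singletonD subsetI)
    next
      show "{log 2 (1 / (walsh n g a)\<^sup>2) | a. a \<in> vecs n \<and> (walsh n g a)\<^sup>2 \<noteq> 0} \<subseteq> {log 2 (1 / c\<^sup>2)}"
      proof
        fix y assume "y \<in> {log 2 (1 / (walsh n g a)\<^sup>2) | a. a \<in> vecs n \<and> (walsh n g a)\<^sup>2 \<noteq> 0}"
        then obtain a where "y = log 2 (1 / (walsh n g a)\<^sup>2)" "a \<in> vecs n" "(walsh n g a)\<^sup>2 \<noteq> 0" by blast
        thus "y \<in> {log 2 (1 / c\<^sup>2)}" using sq by fastforce
      qed
    qed
    have "2 powr (- H_inf n g) = c\<^sup>2"
      unfolding H_inf_def H using cpos by (simp add: powr_minus)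
    have "plateaued (n + 1) (gext g b)" unfolding plateaued_def using Vv by blast
    moreover have "\<forall>\<beta>\<in>vecs (n + 1). (walsh (n + 1) (gext g b) \<beta>)\<^sup>2 \<noteq> 0 \<longrightarrow>
              (walsh (n + 1) (gext g b) \<beta>)\<^sup>2 = c\<^sup>2"
    proof (intro ballI impI)
      fix \<beta> assume "\<beta> \<in> vecs (n + 1)" "(walsh (n + 1) (gext g b) \<beta>)\<^sup>2 \<noteq> 0"
      thus "(walsh (n + 1) (gext g b) \<beta>)\<^sup>2 = c\<^sup>2" using Vv[of \<beta>] by auto
    qed
    ultimately show ?thesis
      using M \<open>2 powr (- H_inf n g) = c\<^sup>2\<close> by simp
  qed
  show ?thesis using R1 R2 P by blast
qed

end
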